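(* Let $G$ be a $d$-regular graph of order $n$ with $d\ge 4$. Then \[ f_o(L(G))\ge \frac{n}{2}-\frac12\left\lfloor \frac{n}{5}\right\rfloor\ge \frac{2n}{5}. \]
   Context: All graphs are finite and simple. An induced subgraph of a graph is called odd if every vertex of it has odd degree in it. $f_o(G)$ denotes the maximum order of an odd induced subgraph of $G$. $L(G)$ is the line graph of $G$. *)

theory Defs
  imports Complex_Main
begin

definition simple_graph :: "'a set \<Rightarrow> 'a set set \<Rightarrow> bool" where
  "simple_graph V E \<longleftrightarrow> finite V \<and> (\<forall>e\<in>E. e \<subseteq> V \<and> card e = 2)"

definition degree :: "'a set set \<Rightarrow> 'a \<Rightarrow> nat" where
  "degree E v = card {e\<in>E. v \<in> e}"

definition regular :: "'a set \<Rightarrow> 'a set set \<Rightarrow> nat \<Rightarrow> bool" where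
  "regular V E d \<longleftrightarrow> (\<forall>v\<in>V. degree E v = d)"

definition odd_induced :: "'a set \<Rightarrow> 'a set set \<Rightarrow> 'a set \<Rightarrow> bool" where
  "odd_induced V E S \<longleftrightarrow> S \<subseteq> V \<and> (\<forall>v\<in>S. odd (card {e\<in>E. v \<in> e \<and> e \<subseteq> S}))"

text \<open>Maximum order of an odd induced subgraph (the empty set is trivially odd).\<close>
definition f_o :: "'a set \<Rightarrow> 'a set set \<Rightarrow> nat" where
  "f_o V E = Max (card ` {S. odd_induced V E S})"

text \<open>Line graph: vertices are the edges of G; two distinct edges are adjacent
  iff they share an endpoint.\<close>
definition line_graph_edges :: "'a set set \<Rightarrow> 'a set set set" where
  "line_graph_edges E = {{e, f} | e f. e \<in> E \<and> f \<in> E \<and> e \<noteq> f \<and> e \<inter> f \<noteq> {}}"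

end

theory Submission
  imports Defs
begin

locale sg =
  fixes V :: "'a set" and E :: "'a set set"
  assumes sg: "simple_graph V E"
begin

lemma finV: "finite V" using sg by (simp add: simple_graph_def)

lemma edge_sub: "e \<in> E \<Longrightarrow> e \<subseteq> V" using sg by (simp add: simple_graph_def)

lemma edge_card: "e \<in> E \<Longrightarrow> card e = 2" using sg by (simp add: simple_graph_def)

lemma finE: "finite E"
proof -
  have "E \<subseteq> Pow V" using edge_sub by blast
  thus ?thesis using finV finite_subset by blast
qed

definition nb :: "'a \<Rightarrow> 'a set" where "nb v = {w. {v,w} \<in> E}"

lemma nb_sub: "nb v \<subseteq> V" using edge_sub by (auto simp: nb_def)

lemma fin_nb: "finite (nb v)" using nb_sub finV finite_subset by blast

lemma nb_not: "v \<notin> nb v"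
  using edge_card[of "{v}"] by (auto simp: nb_def)

lemma nb_sym: "w \<in> nb v \<longleftrightarrow> v \<in> nb w" by (simp add: nb_def insert_commute)

lemma card_nb: "card (nb v) = degree E v"
proof -
  have "bij_betw (\<lambda>w. {v,w}) (nb v) {e\<in>E. v \<in> e}"
  proof (rule bij_betwI')
    show "\<And>x y. x \<in> nb v \<Longrightarrow> y \<in> nb v \<Longrightarrow> ({v, x} = {v, y}) = (x = y)"
      using nb_not by (auto simp: doubleton_eq_iff)
    show "\<And>x. x \<in> nb v \<Longrightarrow> {v, x} \<in> {e \<in> E. v \<in> e}" by (auto simp: nb_def)
    show "\<exists>x\<in>nb v. y = {v, x}" if "y \<in> {e \<in> E. v \<in> e}" for y
    proof -
      from that have "y \<in> E" "v \<in> y" by auto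
      then obtain a b where "y = {a,b}" "a \<noteq> b" using edge_card card_2_iff by metis
      with \<open>v \<in> y\<close> \<open>y \<in> E\<close> show ?thesis by (auto simp: nb_def insert_commute)
    qed
  qed
  thus ?thesis unfolding degree_def by (simp add: bij_betw_same_card)
qed

lemma even2: "even (k::nat) \<Longrightarrow> k \<noteq> 0 \<Longrightarrow> 2 \<le> k" by presburger

lemma odd_pred: "even (k::nat) \<Longrightarrow> 2 \<le> k \<Longrightarrow> odd (k - 1)" by presburger

definition cls :: "'a set \<Rightarrow> ('a \<Rightarrow> 'a) \<Rightarrow> 'a \<Rightarrow> 'a set" where
  "cls L p z = {v\<in>L. p v = z}"

definition valid :: "'a set \<Rightarrow> ('a \<Rightarrow> 'a) \<Rightarrow> bool" where
  "valid L p \<longleftrightarrow> L \<subseteq> V \<and> (\<forall>v\<in>L. {v, p v} \<in> E) \<and> (\<forall>v\<in>L. p v \<notin> L)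
     \<and> (\<forall>z. even (card (cls L p z)))"

lemma move:
  assumes val: "valid L p" and R: "R \<subseteq> L" and fY: "finite Y" and Ynb: "Y \<subseteq> nb x"
    and YL: "Y \<inter> L = {}" and xY: "x \<notin> Y" and xL: "x \<notin> L - R"
    and pY: "\<forall>v\<in>L-R. p v \<notin> Y"
    and ev1: "\<forall>z. z \<noteq> x \<longrightarrow> even (card (cls L p z - R))"
    and ev2: "even (card Y + card (cls L p x - R))"
  shows "valid (L - R \<union> Y) (\<lambda>v. if v\<in>Y then x else p v)"
    and "card (L - R \<union> Y) = card L - card R + card Y"
proof -
  have LV: "L \<subseteq> V" using val by (simp add: valid_def)
  have fL: "finite L" using LV finV finite_subset by blast
  show "card (L - R \<union> Y) = card L - card R + card Y"
  proof -
    have "card (L - R \<union> Y) = card (L - R) + card Y"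
      using fL fY YL by (subst card_Un_disjoint) auto
    moreover have "card (L - R) = card L - card R" using R fL by (simp add: card_Diff_subset finite_subset)
    ultimately show ?thesis by simp
  qed
  let ?p = "\<lambda>v. if v\<in>Y then x else p v"
  let ?L = "L - R \<union> Y"
  have "?L \<subseteq> V" using LV Ynb nb_sub by blast
  moreover have "\<forall>v\<in>?L. {v, ?p v} \<in> E"
    using val Ynb by (auto simp: valid_def nb_def insert_commute)
  moreover have "\<forall>v\<in>?L. ?p v \<notin> ?L"
    using val xY xL pY by (auto simp: valid_def)
  moreover have "even (card (cls ?L ?p z))" for z
  proof (cases "z = x")
    case True
    have "cls ?L ?p z = Y \<union> (cls L p x - R)" using True xY YL by (auto simp: cls_def)
    moreover have "card (Y \<union> (cls L p x - R)) = card Y + card (cls L p x - R)"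
      using fY fL YL by (subst card_Un_disjoint) (auto simp: cls_def)
    ultimately show ?thesis using ev2 by simp
  next
    case False
    have "cls ?L ?p z = cls L p z - R" using False YL by (auto simp: cls_def)
    thus ?thesis using ev1 False by simp
  qed
  ultimately show "valid ?L ?p" by (simp add: valid_def)
qed

end

locale maxp = sg +
  fixes L :: "'a set" and p :: "'a \<Rightarrow> 'a"
  assumes val: "valid L p"
    and maxim: "\<And>L' p'. valid L' p' \<Longrightarrow> card L' \<le> card L"
begin

abbreviation "U \<equiv> V - (L \<union> p ` L)"

lemma LV: "L \<subseteq> V" using val by (simp add: valid_def)
lemma fL: "finite L" using LV finV finite_subset by blast
lemma pE: "v \<in> L \<Longrightarrow> {v, p v} \<in> E" using val by (simp add: valid_def)
lemma pnb: "v \<in> L \<Longrightarrow> p v \<in> nb v" using pE by (simp add: nb_def)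
lemma pV: "v \<in> L \<Longrightarrow> p v \<in> V" using pnb nb_sub by blast
lemma pL: "v \<in> L \<Longrightarrow> p v \<notin> L" using val by (simp add: valid_def)
lemma ev: "even (card (cls L p z))" using val by (simp add: valid_def)
lemma fcls: "finite (cls L p z)" using fL by (simp add: cls_def)
lemma cls_ge2: "v \<in> L \<Longrightarrow> 2 \<le> card (cls L p (p v))"
proof -
  assume "v \<in> L"
  hence "v \<in> cls L p (p v)" by (simp add: cls_def)
  hence "card (cls L p (p v)) \<noteq> 0" using fcls by auto
  thus ?thesis using ev[of "p v"] even2 by blast
qed
lemma cls_center_empty: "v \<in> L \<Longrightarrow> cls L p v = {}" using pL by (auto simp: cls_def)
lemma cls_nonc_empty: "z \<notin> p ` L \<Longrightarrow> cls L p z = {}" by (auto simp: cls_def)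

lemma U_notL: "x \<in> U \<Longrightarrow> x \<notin> L" by blast
lemma U_notZ: "x \<in> U \<Longrightarrow> x \<notin> p ` L" by blast

lemma fA: assumes u: "u \<in> U" shows "card (nb u \<inter> U) \<le> 1"
proof (rule ccontr)
  assume "\<not> ?thesis"
  then obtain Y where Y: "Y \<subseteq> nb u \<inter> U" "card Y = 2" "finite Y"
    using obtain_subset_with_card_n[of 2 "nb u \<inter> U"] by force
  have c: "cls L p u = {}" using u cls_nonc_empty by blast
  have h1: "{} \<subseteq> L" by simp
  have h2: "Y \<subseteq> nb u" using Y by blast
  have h3: "Y \<inter> L = {}" using Y by blast
  have h4: "u \<notin> Y" using Y nb_not by blast
  have h5: "u \<notin> L - {}" using u by blast
  have h6: "\<forall>v\<in>L-{}. p v \<notin> Y" using Y by blast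
  have h7: "\<forall>z. z \<noteq> u \<longrightarrow> even (card (cls L p z - {}))" using ev by simp
  have h8: "even (card Y + card (cls L p u - {}))" using c Y by simp
  have "card (L - {} \<union> Y) = card L - card {} + card Y"
    using move(2)[OF val h1 Y(3) h2 h3 h4 h5 h6 h7 h8] by simp
  moreover have "valid (L - {} \<union> Y) (\<lambda>v. if v\<in>Y then u else p v)"
    using move(1)[OF val h1 Y(3) h2 h3 h4 h5 h6 h7 h8] by simp
  ultimately show False using maxim Y(2) by fastforce
qed

lemma fB: assumes z: "z \<in> p ` L" shows "card (nb z \<inter> U) \<le> 1"
proof (rule ccontr)
  assume "\<not> ?thesis"
  then obtain Y where Y: "Y \<subseteq> nb z \<inter> U" "card Y = 2" "finite Y"
    using obtain_subset_with_card_n[of 2 "nb z \<inter> U"] by force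
  have zL: "z \<notin> L" using z pL by blast
  have h1: "{} \<subseteq> L" by simp
  have h2: "Y \<subseteq> nb z" using Y by blast
  have h3: "Y \<inter> L = {}" using Y by blast
  have h4: "z \<notin> Y" using Y nb_not by blast
  have h5: "z \<notin> L - {}" using zL by blast
  have h6: "\<forall>v\<in>L-{}. p v \<notin> Y" using Y by blast
  have h7: "\<forall>z'. z' \<noteq> z \<longrightarrow> even (card (cls L p z' - {}))" using ev by simp
  have h8: "even (card Y + card (cls L p z - {}))" using ev[of z] Y by simp
  have "card (L - {} \<union> Y) = card L - card {} + card Y"
    using move(2)[OF val h1 Y(3) h2 h3 h4 h5 h6 h7 h8] by simp
  moreover have "valid (L - {} \<union> Y) (\<lambda>v. if v\<in>Y then z else p v)"
    using move(1)[OF val h1 Y(3) h2 h3 h4 h5 h6 h7 h8] by simp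
  ultimately show False using maxim Y(2) by fastforce
qed

lemma fC2: assumes l: "l \<in> L" shows "card (nb l \<inter> U) \<le> 3"
proof (rule ccontr)
  assume "\<not> ?thesis"
  then obtain Y where Y: "Y \<subseteq> nb l \<inter> U" "card Y = 4" "finite Y"
    using obtain_subset_with_card_n[of 4 "nb l \<inter> U"] by force
  define c where "c = p l"
  have "\<exists>l'. l' \<in> cls L p c \<and> l' \<noteq> l"
  proof (rule ccontr)
    assume "\<not> ?thesis"
    hence "cls L p c \<subseteq> {l}" by blast
    hence "card (cls L p c) \<le> 1" using card_mono[of "{l}"] by fastforce
    thus False using cls_ge2[OF l] c_def by simp
  qed
  then obtain l' where l': "l' \<in> cls L p c" "l' \<noteq> l" by blast
  have lc: "l \<in> cls L p c" using l c_def by (simp add: cls_def)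
  define R where "R = {l, l'}"
  have R: "R \<subseteq> cls L p c" "R \<subseteq> L" "card R = 2" using l' lc by (auto simp: R_def cls_def)
  have h7: "\<forall>z. z \<noteq> l \<longrightarrow> even (card (cls L p z - R))"
  proof (intro allI impI)
    fix z assume "z \<noteq> l"
    show "even (card (cls L p z - R))"
    proof (cases "z = c")
      case True
      have "card (cls L p z - R) = card (cls L p z) - 2" using True R fcls by (simp add: card_Diff_subset finite_subset)
      moreover have "2 \<le> card (cls L p z)" using True cls_ge2[OF l] c_def by simp
      ultimately show ?thesis using ev[of z] by presburger
    next
      case False
      hence "cls L p z - R = cls L p z" using R by (auto simp: cls_def)
      thus ?thesis using ev by simp
    qed
  qed
  have h2: "Y \<subseteq> nb l" using Y by blast
  have h3: "Y \<inter> L = {}" using Y by blast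
  have h4: "l \<notin> Y" using Y nb_not by blast
  have h5: "l \<notin> L - R" by (simp add: R_def)
  have h6: "\<forall>v\<in>L-R. p v \<notin> Y" using Y by blast
  have h8: "even (card Y + card (cls L p l - R))" using cls_center_empty[OF l] Y by simp
  have "card (L - R \<union> Y) = card L - card R + card Y"
    using move(2)[OF val R(2) Y(3) h2 h3 h4 h5 h6 h7 h8] by simp
  moreover have "valid (L - R \<union> Y) (\<lambda>v. if v\<in>Y then l else p v)"
    using move(1)[OF val R(2) Y(3) h2 h3 h4 h5 h6 h7 h8] by simp
  moreover have "card R \<le> card L" using R fL card_mono by blast
  ultimately show False using maxim Y(2) R(3) by fastforce
qed

lemma fC1: assumes l: "l \<in> L" and two: "card (cls L p (p l)) = 2" shows "card (nb l \<inter> U) \<le> 2"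
proof (rule ccontr)
  assume "\<not> ?thesis"
  then obtain X where X: "X \<subseteq> nb l \<inter> U" "card X = 3" "finite X"
    using obtain_subset_with_card_n[of 3 "nb l \<inter> U"] by force
  define c where "c = p l"
  have lc: "l \<in> cls L p c" using l c_def by (simp add: cls_def)
  obtain a b where ab: "cls L p c = {a, b}" "a \<noteq> b"
    using two unfolding c_def card_2_iff by blast
  obtain l' where R: "cls L p c = {l, l'}" "l' \<noteq> l"
  proof (cases "l = a")
    case True
    thus ?thesis using that[of b] ab by simp
  next
    case False
    hence "l = b" using ab lc by blast
    thus ?thesis using that[of a] ab by (simp add: insert_commute)
  qed
  define Y where "Y = insert c X"
  have cL: "c \<notin> L" using pL l c_def by blast
  have cX: "c \<notin> X" using X l c_def by blast
  have cY: "card Y = 4" using X cX by (simp add: Y_def)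
  have fY: "finite Y" using X by (simp add: Y_def)
  have h2: "Y \<subseteq> nb l" using X pnb[OF l] c_def by (auto simp: Y_def)
  have RL: "{l, l'} \<subseteq> L" using R(1) by (auto simp: cls_def)
  have h7: "\<forall>z. z \<noteq> l \<longrightarrow> even (card (cls L p z - {l, l'}))"
  proof (intro allI impI)
    fix z assume "z \<noteq> l"
    show "even (card (cls L p z - {l, l'}))"
    proof (cases "z = c")
      case True
      thus ?thesis using R by simp
    next
      case False
      hence "cls L p z - {l,l'} = cls L p z" using R(1) by (auto simp: cls_def)
      thus ?thesis using ev by simp
    qed
  qed
  have h6: "\<forall>v\<in>L - {l, l'}. p v \<notin> Y"
  proof
    fix v assume v: "v \<in> L - {l, l'}"
    have "p v \<noteq> c" using v R(1) by (auto simp: cls_def)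
    moreover have "p v \<notin> X" using X v by blast
    ultimately show "p v \<notin> Y" by (simp add: Y_def)
  qed
  have h3: "Y \<inter> L = {}" using X cL by (auto simp: Y_def)
  have h4: "l \<notin> Y" using h2 nb_not by blast
  have h5: "l \<notin> L - {l, l'}" by simp
  have h8: "even (card Y + card (cls L p l - {l, l'}))" using cls_center_empty[OF l] cY by simp
  have "card (L - {l,l'} \<union> Y) = card L - card {l,l'} + card Y"
    using move(2)[OF val RL fY h2 h3 h4 h5 h6 h7 h8] by simp
  moreover have "valid (L - {l,l'} \<union> Y) (\<lambda>v. if v\<in>Y then l else p v)"
    using move(1)[OF val RL fY h2 h3 h4 h5 h6 h7 h8] by simp
  moreover have "card {l,l'} \<le> card L" using RL fL card_mono by blast
  ultimately show False using maxim cY R(2) by fastforce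
qed

lemma count:
  assumes reg: "\<And>v. v \<in> V \<Longrightarrow> degree E v = d" and d4: "4 \<le> d"
  shows "3 * card V \<le> 7 * card L"
proof -
  define Z where "Z = p ` L"
  define C where "C = L \<union> Z"
  define g where "g v = card (nb v \<inter> U)" for v
  have fZ: "finite Z" using fL by (simp add: Z_def)
  have fC: "finite C" using fZ fL by (simp add: C_def)
  have LZ: "L \<inter> Z = {}" using pL by (auto simp: Z_def)
  have CV: "C \<subseteq> V" using LV pV by (auto simp: C_def Z_def)
  have UC: "U = V - C" by (simp add: C_def Z_def)
  have fU: "finite U" using finV by simp
  have S1: "3 * card U \<le> (\<Sum>u\<in>U. card (nb u \<inter> C))"
  proof -
    have "card (nb u \<inter> C) \<ge> 3" if u: "u \<in> U" for u
    proof -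
      have "card (nb u) = d" using reg u card_nb by simp
      moreover have "nb u = (nb u \<inter> U) \<union> (nb u \<inter> C)" using nb_sub UC by blast
      moreover have "card ((nb u \<inter> U) \<union> (nb u \<inter> C)) = card (nb u \<inter> U) + card (nb u \<inter> C)"
        by (rule card_Un_disjoint) (use fin_nb UC in auto)
      ultimately have "d = card (nb u \<inter> U) + card (nb u \<inter> C)" by simp
      moreover have "card (nb u \<inter> U) \<le> 1" using fA u by blast
      ultimately show ?thesis using d4 by linarith
    qed
    hence "(\<Sum>u\<in>U. (3::nat)) \<le> (\<Sum>u\<in>U. card (nb u \<inter> C))" by (intro sum_mono) auto
    thus ?thesis by simp
  qed
  have S2: "(\<Sum>u\<in>U. card (nb u \<inter> C)) = (\<Sum>v\<in>C. g v)"
  proof -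
    have "(\<Sum>u\<in>U. card (nb u \<inter> C)) = card (SIGMA u:U. nb u \<inter> C)"
      using fU fin_nb by simp
    also have "(SIGMA u:U. nb u \<inter> C) = prod.swap ` (SIGMA v:C. nb v \<inter> U)"
      using nb_sym by (auto simp: image_iff)
    also have "card \<dots> = card (SIGMA v:C. nb v \<inter> U)"
      by (rule card_image) (simp add: swap_inj_on)
    also have "\<dots> = (\<Sum>v\<in>C. g v)" using fC fin_nb by (simp add: g_def)
    finally show ?thesis .
  qed
  have S3: "(\<Sum>v\<in>C. g v) = (\<Sum>z\<in>Z. g z) + (\<Sum>l\<in>L. g l)"
    unfolding C_def using fZ fL LZ by (subst sum.union_disjoint) auto
  have S4: "(\<Sum>l\<in>L. g l) = (\<Sum>z\<in>Z. \<Sum>l\<in>cls L p z. g l)"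
    using sum.group[OF fL fZ, of p g] by (simp add: Z_def cls_def)
  have S5: "card L = (\<Sum>z\<in>Z. card (cls L p z))"
    using sum.group[OF fL fZ, of p "\<lambda>_. (1::nat)"] by (simp add: Z_def cls_def)
  have S6: "g z + (\<Sum>l\<in>cls L p z. g l) + 3 \<le> 4 * card (cls L p z)" if z: "z \<in> Z" for z
  proof -
    obtain l where l: "l \<in> L" "z = p l" using z by (auto simp: Z_def)
    define k where "k = card (cls L p z)"
    have k2: "2 \<le> k" using cls_ge2[OF l(1)] l(2) k_def by simp
    have kev: "even k" using ev k_def by simp
    have gz: "g z \<le> 1" using fB l by (simp add: g_def)
    show ?thesis
    proof (cases "k = 2")
      case True
      have "g l' \<le> 2" if "l' \<in> cls L p z" for l'
      proof -
        have "l' \<in> L" "p l' = z" using that by (auto simp: cls_def)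
        thus ?thesis using fC1[of l'] True k_def by (simp add: g_def)
      qed
      hence "(\<Sum>l\<in>cls L p z. g l) \<le> k * 2" using sum_bounded_above[of "cls L p z" g 2] k_def by simp
      thus ?thesis using gz True k_def by simp
    next
      case False
      hence k4: "4 \<le> k" using k2 kev by presburger
      have "g l' \<le> 3" if "l' \<in> cls L p z" for l'
      proof -
        have "l' \<in> L" using that by (auto simp: cls_def)
        thus ?thesis using fC2[of l'] by (simp add: g_def)
      qed
      hence "(\<Sum>l\<in>cls L p z. g l) \<le> k * 3" using sum_bounded_above[of "cls L p z" g 3] k_def by simp
      thus ?thesis using gz k4 k_def by simp
    qed
  qed
  have S7: "(\<Sum>z\<in>Z. g z) + (\<Sum>l\<in>L. g l) + 3 * card Z \<le> 4 * card L"
  proof -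
    have "(\<Sum>z\<in>Z. g z + (\<Sum>l\<in>cls L p z. g l) + 3) \<le> (\<Sum>z\<in>Z. 4 * card (cls L p z))"
      using S6 by (intro sum_mono) auto
    moreover have "(\<Sum>z\<in>Z. g z + (\<Sum>l\<in>cls L p z. g l) + 3) = (\<Sum>z\<in>Z. g z) + (\<Sum>l\<in>L. g l) + 3 * card Z"
      using S4 by (simp add: sum.distrib)
    moreover have "(\<Sum>z\<in>Z. 4 * card (cls L p z)) = 4 * card L"
      using S5 by (simp add: sum_distrib_left)
    ultimately show ?thesis by simp
  qed
  have cardV: "card V = card L + card Z + card U"
  proof -
    have "V = C \<union> U" using CV UC by blast
    hence "card V = card C + card U" using fC fU UC card_Un_disjoint by (metis Diff_disjoint)
    moreover have "card C = card L + card Z" unfolding C_def using fL fZ LZ card_Un_disjoint by blast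
    ultimately show ?thesis by simp
  qed
  show ?thesis using S1 S2 S3 S7 cardV by linarith
qed

definition F where "F = (\<lambda>v. {v, p v}) ` L"

lemma cardF: "card F = card L"
proof -
  have "inj_on (\<lambda>v. {v, p v}) L"
  proof (rule inj_onI)
    fix v w assume v: "v \<in> L" and w: "w \<in> L" and eq: "{v, p v} = {w, p w}"
    show "v = w"
    proof (rule ccontr)
      assume "v \<noteq> w"
      hence "v = p w" using eq by (auto simp: doubleton_eq_iff)
      thus False using pL[OF w] v by simp
    qed
  qed
  thus ?thesis by (simp add: F_def card_image)
qed

lemma FE: "F \<subseteq> E" using pE by (auto simp: F_def)

lemma oddF: "odd_induced E (line_graph_edges E) F"
  unfolding odd_induced_def
proof (intro conjI ballI)
  show "F \<subseteq> E" by (rule FE)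
  fix e assume e: "e \<in> F"
  then obtain l where l: "l \<in> L" "e = {l, p l}" by (auto simp: F_def)
  have A: "{x \<in> line_graph_edges E. e \<in> x \<and> x \<subseteq> F} = (\<lambda>f. {e,f}) ` {f\<in>F. f \<noteq> e \<and> e \<inter> f \<noteq> {}}"
  proof
    show "{x \<in> line_graph_edges E. e \<in> x \<and> x \<subseteq> F} \<subseteq> (\<lambda>f. {e,f}) ` {f\<in>F. f \<noteq> e \<and> e \<inter> f \<noteq> {}}"
    proof
      fix x assume x: "x \<in> {x \<in> line_graph_edges E. e \<in> x \<and> x \<subseteq> F}"
      then obtain a b where ab: "x = {a,b}" "a \<in> E" "b \<in> E" "a \<noteq> b" "a \<inter> b \<noteq> {}"
        by (auto simp: line_graph_edges_def)
      have ex: "e \<in> x" "x \<subseteq> F" using x by auto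
      show "x \<in> (\<lambda>f. {e,f}) ` {f\<in>F. f \<noteq> e \<and> e \<inter> f \<noteq> {}}"
      proof (cases "e = a")
        case True
        thus ?thesis using ab ex by auto
      next
        case False
        hence "e = b" using ab ex by auto
        hence "x = {e, a}" using ab by auto
        thus ?thesis using ab ex \<open>e = b\<close> by (auto simp: Int_commute)
      qed
    qed
    show "(\<lambda>f. {e,f}) ` {f\<in>F. f \<noteq> e \<and> e \<inter> f \<noteq> {}} \<subseteq> {x \<in> line_graph_edges E. e \<in> x \<and> x \<subseteq> F}"
      using FE e by (auto simp: line_graph_edges_def)
  qed
  have inj: "inj_on (\<lambda>f. {e,f}) {f\<in>F. f \<noteq> e \<and> e \<inter> f \<noteq> {}}"
    by (rule inj_onI) (auto simp: doubleton_eq_iff)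
  have B: "{f\<in>F. f \<noteq> e \<and> e \<inter> f \<noteq> {}} = (\<lambda>v. {v, p v}) ` (cls L p (p l) - {l})"
  proof
    show "{f\<in>F. f \<noteq> e \<and> e \<inter> f \<noteq> {}} \<subseteq> (\<lambda>v. {v, p v}) ` (cls L p (p l) - {l})"
    proof
      fix f assume f: "f \<in> {f\<in>F. f \<noteq> e \<and> e \<inter> f \<noteq> {}}"
      then obtain v where v: "v \<in> L" "f = {v, p v}" by (auto simp: F_def)
      have vl: "v \<noteq> l" using f v l by auto
      have "l \<noteq> p v" using pL[OF v(1)] l by auto
      moreover have "p l \<noteq> v" using pL[OF l(1)] v by auto
      ultimately have "p l = p v" using f v l vl by auto
      thus "f \<in> (\<lambda>v. {v, p v}) ` (cls L p (p l) - {l})" using v vl by (auto simp: cls_def)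
    qed
    show "(\<lambda>v. {v, p v}) ` (cls L p (p l) - {l}) \<subseteq> {f\<in>F. f \<noteq> e \<and> e \<inter> f \<noteq> {}}"
    proof
      fix f assume "f \<in> (\<lambda>v. {v, p v}) ` (cls L p (p l) - {l})"
      then obtain v where v: "v \<in> L" "p v = p l" "v \<noteq> l" "f = {v, p v}" by (auto simp: cls_def)
      have "v \<noteq> p l" using pL[OF l(1)] v(1) by auto
      hence "f \<noteq> e" using v l by (auto simp: doubleton_eq_iff)
      thus "f \<in> {f\<in>F. f \<noteq> e \<and> e \<inter> f \<noteq> {}}" using v l by (auto simp: F_def)
    qed
  qed
  have inj2: "inj_on (\<lambda>v. {v, p v}) (cls L p (p l) - {l})"
  proof (rule inj_onI)
    fix v w assume "v \<in> cls L p (p l) - {l}" "w \<in> cls L p (p l) - {l}" "{v, p v} = {w, p w}"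
    thus "v = w" using pL by (auto simp: cls_def doubleton_eq_iff)
  qed
  have "card {x \<in> line_graph_edges E. e \<in> x \<and> x \<subseteq> F} = card (cls L p (p l) - {l})"
  proof -
    have "card {x \<in> line_graph_edges E. e \<in> x \<and> x \<subseteq> F} = card {f\<in>F. f \<noteq> e \<and> e \<inter> f \<noteq> {}}"
      unfolding A by (rule card_image[OF inj])
    also have "\<dots> = card (cls L p (p l) - {l})" unfolding B by (rule card_image[OF inj2])
    finally show ?thesis .
  qed
  also have "\<dots> = card (cls L p (p l)) - 1" using l(1) fcls by (simp add: cls_def)
  finally show "odd (card {x \<in> line_graph_edges E. e \<in> x \<and> x \<subseteq> F})"
    using ev[of "p l"] cls_ge2[OF l(1)] odd_pred by simp
qed

end

lemma arith_final:
  fixes m n :: nat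
  assumes "3 * n \<le> 7 * m"
  shows "real m \<ge> real n / 2 - real_of_int \<lfloor>real n / 5\<rfloor> / 2
    \<and> real n / 2 - real_of_int \<lfloor>real n / 5\<rfloor> / 2 \<ge> 2 * real n / 5"
proof -
  have fl: "\<lfloor>real n / 5\<rfloor> = int (n div 5)"
    using floor_divide_of_nat_eq[of n 5] by simp
  have a: "n \<le> 2 * m + n div 5"
  proof -
    have "n = 5 * (n div 5) + n mod 5" by simp
    moreover have "n mod 5 < 5" by simp
    ultimately show ?thesis using assms by linarith
  qed
  have b: "5 * (n div 5) \<le> n" by simp
  have a': "real n \<le> 2 * real m + real (n div 5)" using a by (metis of_nat_add of_nat_le_iff of_nat_mult of_nat_numeral)
  have b': "5 * real (n div 5) \<le> real n" using b by (metis of_nat_le_iff of_nat_mult of_nat_numeral)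
  show ?thesis unfolding fl using a' b' by simp
qed

theorem mainTheorem10:
  fixes V :: "'a set" and E :: "'a set set" and d n :: nat
  assumes "simple_graph V E"
    and "regular V E d"
    and "card V = n"
    and "d \<ge> 4"
  shows "real (f_o E (line_graph_edges E)) \<ge> real n / 2 - real_of_int \<lfloor>real n / 5\<rfloor> / 2
    \<and> real n / 2 - real_of_int \<lfloor>real n / 5\<rfloor> / 2 \<ge> 2 * real n / 5"
proof -
  interpret sg V E using assms(1) by (unfold_locales)
  let ?P = "\<lambda>(L, p). valid L p"
  have P0: "?P ({}, id)" by (simp add: valid_def cls_def)
  have bnd: "\<forall>y. ?P y \<longrightarrow> card (fst y) < Suc (card V)"
  proof (intro allI impI)
    fix y assume "?P y"
    hence "fst y \<subseteq> V" by (cases y) (simp add: valid_def)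
    thus "card (fst y) < Suc (card V)" using card_mono[OF finV] by (simp add: less_Suc_eq_le)
  qed
  obtain x where x: "?P x" "\<forall>y. ?P y \<longrightarrow> card (fst y) \<le> card (fst x)"
    using Lattices_Big.ex_has_greatest_nat[of ?P "({}, id)" "\<lambda>y. card (fst y)", OF P0 bnd] by blast
  obtain L p where Lp: "x = (L, p)" by (cases x)
  have vL: "valid L p" using x(1) Lp by simp
  have mx: "\<And>L' p'. valid L' p' \<Longrightarrow> card L' \<le> card L"
    using x(2) Lp by (metis (mono_tags, lifting) case_prod_conv fst_conv)
  interpret maxp V E L p by (unfold_locales) (use vL mx in auto)
  have reg: "\<And>v. v \<in> V \<Longrightarrow> degree E v = d" using assms(2) by (simp add: regular_def)
  have c: "3 * n \<le> 7 * card L" using count[OF reg assms(4)] assms(3) by simp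
  have fin: "finite {S. odd_induced E (line_graph_edges E) S}"
  proof (rule finite_subset[of _ "Pow E"])
    show "{S. odd_induced E (line_graph_edges E) S} \<subseteq> Pow E" by (auto simp: odd_induced_def)
    show "finite (Pow E)" using finE by simp
  qed
  have "card F \<le> f_o E (line_graph_edges E)"
    unfolding f_o_def using fin oddF by (intro Max_ge) auto
  hence "card L \<le> f_o E (line_graph_edges E)" using cardF by simp
  hence "3 * n \<le> 7 * f_o E (line_graph_edges E)" using c by linarith
  thus ?thesis by (rule arith_final)
qed

end
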